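(* Let $\mathscr H_1,\dots,\mathscr H_N$ be null hypotheses with associated random "p-values" $p_1,\dots,p_N$; call $p_l$ null if $\mathscr H_l$ is true. Assume the null p-values are i.i.d., satisfy $\Pr(p_l\le u)\le u$ for all $u\in[0,1]$, and are independent of the non-null p-values. Fix $q\in(0,1]$ and $\mathcal K\subset\{1,\dots,N\}$. Define $$\hat k=\max\Big\{k\in\mathcal K:\frac{\#\{l\le k:p_l>1/2\}}{\#\{l\le k:p_l\le 1/2\}\vee1}\le q\Big\},\qquad \hat k_+=\max\Big\{k\in\mathcal K:\frac{1+\#\{l\le k:p_l>1/2\}}{\#\{l\le k:p_l\le 1/2\}\vee1}\le q\Big\},$$ with $\hat k=0$ (resp. $\hat k_+=0$) if the set is empty, and reject $\mathscr H_k$ for all $k\le\hat k$ (resp. $k\le \hat k_+$) with $p_k\le1/2$. Let $V=\#\{l\le\hat k: p_l\text{ null},\ p_l\le1/2\}$, $R=\#\{l\le\hat k:p_l\le1/2\}$, $V_+=\#\{l\le\hat k_+: p_l\text{ null},\ p_l\le1/2\}$, $R_+=\#\{l\le\hat k_+:p_l\le1/2\}$ (all zero when the corresponding $\hat k$ or $\hat k_+$ is $0$). Then $$\mathbb E\Big[\frac{V}{R+q^{-1}}\Big]\le q\qquad\text{and}\qquad \mathbb E\Big[\frac{V_+}{R_+\vee1}\Big]\le q.$$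
   Context: Indices $l\le k$ range over $\{1,\dots,k\}$; $a\vee b=\max\{a,b\}$. *)

theory Defs
  imports "HOL-Probability.Probability"
begin

definition n_gt :: "(nat \<Rightarrow> real) \<Rightarrow> nat \<Rightarrow> nat" where
  "n_gt x k = card {l \<in> {1..k}. x l > 1/2}"

definition n_le :: "(nat \<Rightarrow> real) \<Rightarrow> nat \<Rightarrow> nat" where
  "n_le x k = card {l \<in> {1..k}. x l \<le> 1/2}"

text \<open>Stopping index; c = 0 gives k-hat, c = 1 gives k-hat-plus. Value 0 if the set is empty.\<close>
definition khat :: "real \<Rightarrow> nat set \<Rightarrow> real \<Rightarrow> (nat \<Rightarrow> real) \<Rightarrow> nat" where
  "khat c K q x = Max ({0} \<union> {k \<in> K. (c + real (n_gt x k)) / real (max (n_le x k) 1) \<le> q})"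

definition Vcnt :: "nat set \<Rightarrow> (nat \<Rightarrow> real) \<Rightarrow> nat \<Rightarrow> nat" where
  "Vcnt H0 x k = card {l \<in> {1..k}. l \<in> H0 \<and> x l \<le> 1/2}"

end

theory Submission
  imports Defs
begin


definition cnt :: "nat set \<Rightarrow> (nat \<Rightarrow> bool) \<Rightarrow> nat" where
  "cnt H u = card {l\<in>H. u l}"

lemma sum_PiE_insert_bool:
  assumes "b \<notin> A" "finite A"
  shows "(\<Sum>u\<in>Pi\<^sub>E (insert b A) (\<lambda>_. UNIV::bool set). F u)
       = (\<Sum>u\<in>Pi\<^sub>E A (\<lambda>_. UNIV). F (u(b:=True)) + F (u(b:=False)))"
proof -
  have "(\<Sum>u\<in>Pi\<^sub>E (insert b A) (\<lambda>_. UNIV::bool set). F u)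
      = (\<Sum>z\<in>UNIV \<times> Pi\<^sub>E A (\<lambda>_. UNIV::bool set). F ((\<lambda>(y, g). g(b := y)) z))"
    unfolding PiE_insert_eq
    by (subst sum.reindex) (use inj_combinator[OF assms(1), of "\<lambda>_. UNIV::bool set"] in auto)
  also have "\<dots> = (\<Sum>y\<in>UNIV. \<Sum>u\<in>Pi\<^sub>E A (\<lambda>_. UNIV::bool set). F (u(b:=y)))"
    by (simp add: sum.cartesian_product case_prod_unfold)
  also have "\<dots> = (\<Sum>u\<in>Pi\<^sub>E A (\<lambda>_. UNIV). F (u(b:=True)) + F (u(b:=False)))"
    by (simp add: UNIV_bool sum.distrib add.commute)
  finally show ?thesis .
qed

lemma cnt_upd:
  assumes "b \<notin> A" "finite A"
  shows "cnt (insert b A) (u(b:=True)) = Suc (cnt A u)"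
    "cnt (insert b A) (u(b:=False)) = cnt A u"
proof -
  have "{l\<in>insert b A. (u(b:=True)) l} = insert b {l\<in>A. u l}" using assms by auto
  then show "cnt (insert b A) (u(b:=True)) = Suc (cnt A u)" using assms by (simp add: cnt_def)
  have "{l\<in>insert b A. (u(b:=False)) l} = {l\<in>A. u l}" using assms by auto
  then show "cnt (insert b A) (u(b:=False)) = cnt A u" by (simp add: cnt_def)
qed

lemma pascal_sum:
  fixes f :: "nat \<Rightarrow> real"
  shows "(\<Sum>c\<le>n. real (n choose c) * f (Suc c)) + (\<Sum>c\<le>n. real (n choose c) * f c)
     = (\<Sum>c\<le>Suc n. real (Suc n choose c) * f c)"
proof -
  have "(\<Sum>c\<le>Suc n. real (Suc n choose c) * f c) = f 0 + (\<Sum>c\<le>n. real (Suc n choose Suc c) * f (Suc c))"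
    by (subst sum.atMost_Suc_shift) simp
  also have "\<dots> = f 0 + (\<Sum>c\<le>n. real (n choose c) * f (Suc c)) + (\<Sum>c\<le>n. real (n choose Suc c) * f (Suc c))"
    by (simp add: sum.distrib algebra_simps)
  also have "(\<Sum>c\<le>n. real (n choose c) * f c) = f 0 + (\<Sum>c<n. real (n choose Suc c) * f (Suc c))"
    by (simp add: sum.atMost_shift)
  moreover have "(\<Sum>c\<le>n. real (n choose Suc c) * f (Suc c)) = (\<Sum>c<n. real (n choose Suc c) * f (Suc c))"
    by (simp add: lessThan_Suc_atMost[symmetric])
  ultimately show ?thesis by simp
qed

lemma sum_cnt:
  fixes f :: "nat \<Rightarrow> real"
  assumes "finite H"
  shows "(\<Sum>u\<in>Pi\<^sub>E H (\<lambda>_. UNIV::bool set). f (cnt H u)) = (\<Sum>c\<le>card H. real (card H choose c) * f c)"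
  using assms
proof (induction H arbitrary: f rule: finite_induct)
  case empty
  then show ?case by (simp add: cnt_def)
next
  case (insert b A)
  have "(\<Sum>u\<in>Pi\<^sub>E (insert b A) (\<lambda>_. UNIV::bool set). f (cnt (insert b A) u))
     = (\<Sum>u\<in>Pi\<^sub>E A (\<lambda>_. UNIV). f (Suc (cnt A u))) + (\<Sum>u\<in>Pi\<^sub>E A (\<lambda>_. UNIV). f (cnt A u))"
    using insert by (simp add: sum_PiE_insert_bool cnt_upd sum.distrib)
  also have "\<dots> = (\<Sum>c\<le>card A. real (card A choose c) * f (Suc c)) + (\<Sum>c\<le>card A. real (card A choose c) * f c)"
    using insert.IH[of "\<lambda>c. f (Suc c)"] insert.IH[of f] by simp
  also have "\<dots> = (\<Sum>c\<le>card (insert b A). real (card (insert b A) choose c) * f c)"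
    using insert by (simp add: pascal_sum)
  finally show ?case .
qed

lemma binom_id: "(n choose Suc d) * Suc d = (n choose d) * (n - d)"
proof (cases "d \<le> n")
  case True
  then obtain e where e: "n = d + e" using le_Suc_ex by blast
  have "Suc n * (n choose d) = ((n choose d) + (n choose Suc d)) * Suc d"
    using Suc_times_binomial_eq[of n d] by simp
  then show ?thesis unfolding e by (simp add: algebra_simps)
next
  case False
  then show ?thesis by simp
qed

definition phi :: "nat \<Rightarrow> nat \<Rightarrow> real" where
  "phi n c = real c / (1 + real n - real c)"

lemma coef_E:
  assumes "c \<le> Suc n"
  shows "((if c = 0 then 0 else real (n choose (c - 1))) + real (n choose c)) * phi (Suc n) c
       = real (Suc n choose c) * phi (Suc n) c"
  by (cases c) simp_all

lemma coef_nE: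
  assumes "c \<le> Suc n"
  shows "(if c = 0 then 0 else real (n choose (c - 1)) * phi n (c - 1)) + real (n choose c) * phi n c
       \<le> real (Suc n choose c) * phi (Suc n) c"
proof (cases c)
  case 0
  then show ?thesis by (simp add: phi_def)
next
  case (Suc d)
  show ?thesis
  proof (cases "d = n")
    case True
    then show ?thesis using Suc by (simp add: phi_def)
  next
    case False
    with Suc assms have dn: "d < n" by simp
    have i1: "real (n choose Suc d) * real (Suc d) = real (n choose d) * (real n - real d)"
      using binom_id[of n d] dn by (metis of_nat_diff less_imp_le of_nat_mult)
    have i2: "real (Suc n choose Suc d) * real (Suc d) = real (Suc n) * real (n choose d)"
      using Suc_times_binomial_eq[of n d] by (metis of_nat_mult)
    have pos: "1 + real n - real d > 0" "real n - real d > 0" using dn by auto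
    have "real (n choose d) * phi n d + real (n choose Suc d) * phi n (Suc d)
        = real (n choose d) * (real d / (1 + real n - real d)) + real (n choose d)"
    proof -
      have "real (n choose Suc d) * phi n (Suc d) = (real (n choose Suc d) * real (Suc d)) / (real n - real d)"
        unfolding phi_def by simp
      also have "\<dots> = real (n choose d)" using i1 pos by simp
      finally show ?thesis by (simp add: phi_def)
    qed
    also have "\<dots> = real (Suc n choose Suc d) * phi (Suc n) (Suc d)"
      unfolding phi_def using i2 pos by (simp add: field_simps)
    finally show ?thesis using Suc by simp
  qed
qed

definition na :: "nat set \<Rightarrow> (nat \<Rightarrow> bool) \<Rightarrow> nat \<Rightarrow> nat" where
  "na H u k = card {l\<in>H. l \<le> k \<and> u l}"
definition nb :: "nat set \<Rightarrow> (nat \<Rightarrow> bool) \<Rightarrow> nat \<Rightarrow> nat" where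
  "nb H u k = card {l\<in>H. l \<le> k \<and> \<not> u l}"
definition Tst :: "nat set \<Rightarrow> (nat \<Rightarrow> nat \<Rightarrow> nat \<Rightarrow> bool) \<Rightarrow> nat set \<Rightarrow> (nat \<Rightarrow> bool) \<Rightarrow> nat" where
  "Tst K P H u = Max (insert 0 {k\<in>K. P k (na H u k) (nb H u k)})"
definition Gf :: "nat set \<Rightarrow> (nat \<Rightarrow> nat \<Rightarrow> nat \<Rightarrow> bool) \<Rightarrow> nat set \<Rightarrow> (nat \<Rightarrow> bool) \<Rightarrow> real" where
  "Gf K P H u = real (na H u (Tst K P H u)) / (1 + real (nb H u (Tst K P H u)))"
definition Bnd :: "(nat \<Rightarrow> real) \<Rightarrow> nat \<Rightarrow> real" where
  "Bnd g n = (\<Sum>c\<le>n. g c * (real (n choose c) * phi n c))"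

lemma na_nb_top:
  assumes "finite H" "\<forall>l\<in>H. l \<le> k"
  shows "na H u k = cnt H u" "real (nb H u k) = real (card H) - real (cnt H u)"
proof -
  show "na H u k = cnt H u" using assms unfolding na_def cnt_def by (metis (lifting))
  have "{l\<in>H. l \<le> k \<and> \<not> u l} = H - {l\<in>H. u l}" using assms by auto
  then show "real (nb H u k) = real (card H) - real (cnt H u)"
    unfolding nb_def cnt_def using assms by (simp add: card_Diff_subset of_nat_diff card_mono)
qed

lemma na_nb_low:
  assumes "h \<notin> A" "k < h"
  shows "na (insert h A) (u(h:=x)) k = na A u k" "nb (insert h A) (u(h:=x)) k = nb A u k"
proof -
  have "{l\<in>insert h A. l \<le> k \<and> (u(h:=x)) l} = {l\<in>A. l \<le> k \<and> u l}" using assms by auto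
  then show "na (insert h A) (u(h:=x)) k = na A u k" by (simp add: na_def)
  have "{l\<in>insert h A. l \<le> k \<and> \<not> (u(h:=x)) l} = {l\<in>A. l \<le> k \<and> \<not> u l}" using assms by auto
  then show "nb (insert h A) (u(h:=x)) k = nb A u k" by (simp add: nb_def)
qed

lemma Tst_in:
  assumes "finite K"
  shows "Tst K P H u = 0 \<or> (Tst K P H u \<in> K \<and> P (Tst K P H u) (na H u (Tst K P H u)) (nb H u (Tst K P H u)))"
proof -
  have "Tst K P H u \<in> insert 0 {k\<in>K. P k (na H u k) (nb H u k)}"
    unfolding Tst_def using assms by (intro Max_in) auto
  then show ?thesis by auto
qed

lemma Tst_ge:
  assumes "finite K" "k \<in> K" "P k (na H u k) (nb H u k)"
  shows "k \<le> Tst K P H u"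
  unfolding Tst_def using assms by (intro Max_ge) auto

lemma Gf_step:
  fixes P :: "nat \<Rightarrow> nat \<Rightarrow> nat \<Rightarrow> bool"
  assumes fin: "finite A" "finite K" and hA: "\<forall>a\<in>A. a < h" and h0: "0 < h"
  defines "E \<equiv> \<lambda>c. \<exists>k\<in>K. h \<le> k \<and> P k c (Suc (card A) - c)"
  defines "P' \<equiv> \<lambda>k a b. k < h \<and> P k a b"
  shows "Gf K P (insert h A) (u(h:=x)) =
     (if E (cnt (insert h A) (u(h:=x))) then phi (Suc (card A)) (cnt (insert h A) (u(h:=x))) else Gf K P' A u)"
proof -
  let ?H = "insert h A" and ?v = "u(h:=x)"
  have hnA: "h \<notin> A" using hA by auto
  have cH: "card ?H = Suc (card A)" using hnA fin by simp
  have cle: "cnt ?H ?v \<le> card ?H" unfolding cnt_def using fin by (intro card_mono) auto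
  have top: "na ?H ?v k = cnt ?H ?v" "nb ?H ?v k = Suc (card A) - cnt ?H ?v" if "h \<le> k" for k
  proof -
    have "\<forall>l\<in>?H. l \<le> k" using hA that by auto
    then show "na ?H ?v k = cnt ?H ?v" "nb ?H ?v k = Suc (card A) - cnt ?H ?v"
      using na_nb_top[of ?H k ?v] fin cH cle by (auto simp: of_nat_diff)
  qed
  show ?thesis
  proof (cases "E (cnt ?H ?v)")
    case True
    then obtain k where k: "k \<in> K" "h \<le> k" "P k (cnt ?H ?v) (Suc (card A) - cnt ?H ?v)"
      unfolding E_def by blast
    have "k \<le> Tst K P ?H ?v" using k top[OF k(2)] by (intro Tst_ge fin) auto
    then have hT: "h \<le> Tst K P ?H ?v" using k by simp
    have "Gf K P ?H ?v = phi (Suc (card A)) (cnt ?H ?v)"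
      unfolding Gf_def phi_def top[OF hT] using cle cH by (simp add: of_nat_diff)
    then show ?thesis using True by simp
  next
    case False
    have set_eq: "{k\<in>K. P k (na ?H ?v k) (nb ?H ?v k)} = {k\<in>K. P' k (na A u k) (nb A u k)}"
    proof -
      { fix k assume "k \<in> K" "h \<le> k" "P k (na ?H ?v k) (nb ?H ?v k)"
        then have False using False top unfolding E_def by auto }
      note ex = this
      show ?thesis
      proof (intro set_eqI iffI)
        fix k assume k: "k \<in> {k\<in>K. P k (na ?H ?v k) (nb ?H ?v k)}"
        then have "k \<in> K" "P k (na ?H ?v k) (nb ?H ?v k)" by auto
        then have "\<not> h \<le> k" using ex by blast
        then have "k < h" by simp
        then show "k \<in> {k\<in>K. P' k (na A u k) (nb A u k)}"
          using k na_nb_low[OF hnA, of k u x] unfolding P'_def by simp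
      next
        fix k assume k: "k \<in> {k\<in>K. P' k (na A u k) (nb A u k)}"
        then have "k < h" unfolding P'_def by simp
        then show "k \<in> {k\<in>K. P k (na ?H ?v k) (nb ?H ?v k)}"
          using k na_nb_low[OF hnA, of k u x] unfolding P'_def by simp
      qed
    qed
    have TT: "Tst K P ?H ?v = Tst K P' A u" unfolding Tst_def set_eq ..
    have "Tst K P' A u < h" using Tst_in[OF fin(2), of P' A u] h0 unfolding P'_def by auto
    then have "Gf K P ?H ?v = Gf K P' A u" unfolding Gf_def TT using na_nb_low[OF hnA] by simp
    then show ?thesis using False by simp
  qed
qed

lemma num_ineq:
  fixes g :: "nat \<Rightarrow> real" and E :: "nat \<Rightarrow> bool"
  assumes g: "\<And>c. 0 \<le> g c"
  shows "(\<Sum>c\<le>n. real (n choose c) * ((if E (Suc c) then g (Suc c) * phi (Suc n) (Suc c) else 0)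
                                   + (if E c then g c * phi (Suc n) c else 0)))
       + Bnd (\<lambda>c. if E (Suc c) then 0 else g (Suc c)) n + Bnd (\<lambda>c. if E c then 0 else g c) n
       \<le> Bnd g (Suc n)"
proof -
  define X where "X c = (if E c then g c * phi (Suc n) c else g c * phi n (c - 1))" for c
  define Y where "Y c = (if E c then g c * phi (Suc n) c else g c * phi n c)" for c
  have "(\<Sum>c\<le>n. real (n choose c) * ((if E (Suc c) then g (Suc c) * phi (Suc n) (Suc c) else 0)
                                   + (if E c then g c * phi (Suc n) c else 0)))
       + Bnd (\<lambda>c. if E (Suc c) then 0 else g (Suc c)) n + Bnd (\<lambda>c. if E c then 0 else g c) n
      = (\<Sum>c\<le>n. real (n choose c) * X (Suc c)) + (\<Sum>c\<le>n. real (n choose c) * Y c)"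
    unfolding Bnd_def X_def Y_def by (simp only: sum.distrib[symmetric]) (intro sum.cong refl, auto simp: algebra_simps)
  also have "(\<Sum>c\<le>n. real (n choose c) * X (Suc c))
      = (\<Sum>c\<le>Suc n. (if c = 0 then 0 else real (n choose (c - 1)) * X c))"
    by (subst sum.atMost_Suc_shift) simp
  also have "(\<Sum>c\<le>n. real (n choose c) * Y c) = (\<Sum>c\<le>Suc n. real (n choose c) * Y c)"
    by simp
  also have "(\<Sum>c\<le>Suc n. (if c = 0 then 0 else real (n choose (c - 1)) * X c))
      + (\<Sum>c\<le>Suc n. real (n choose c) * Y c)
      = (\<Sum>c\<le>Suc n. (if c = 0 then 0 else real (n choose (c - 1)) * X c) + real (n choose c) * Y c)"
    by (simp add: sum.distrib)
  also have "\<dots> \<le> (\<Sum>c\<le>Suc n. g c * (real (Suc n choose c) * phi (Suc n) c))"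
  proof (rule sum_mono)
    fix c assume "c \<in> {..Suc n}"
    then have c: "c \<le> Suc n" by simp
    show "(if c = 0 then 0 else real (n choose (c - 1)) * X c) + real (n choose c) * Y c
        \<le> g c * (real (Suc n choose c) * phi (Suc n) c)"
    proof (cases "E c")
      case True
      have "(if c = 0 then 0 else real (n choose (c - 1)) * X c) + real (n choose c) * Y c
          = g c * (((if c = 0 then 0 else real (n choose (c - 1))) + real (n choose c)) * phi (Suc n) c)"
        unfolding X_def Y_def using True by (simp add: algebra_simps)
      also have "\<dots> = g c * (real (Suc n choose c) * phi (Suc n) c)"
        using coef_E[OF c] by simp
      finally show ?thesis by simp
    next
      case False
      have "(if c = 0 then 0 else real (n choose (c - 1)) * X c) + real (n choose c) * Y c
          = g c * ((if c = 0 then 0 else real (n choose (c - 1)) * phi n (c - 1)) + real (n choose c) * phi n c)"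
        unfolding X_def Y_def using False by (simp add: algebra_simps)
      also have "\<dots> \<le> g c * (real (Suc n choose c) * phi (Suc n) c)"
        using coef_nE[OF c] g by (intro mult_left_mono) auto
      finally show ?thesis .
    qed
  qed
  finally show ?thesis unfolding Bnd_def .
qed

lemma core:
  assumes "finite H" "finite K" "\<forall>l\<in>H. 0 < l" "\<And>c. 0 \<le> g c"
  shows "(\<Sum>u\<in>Pi\<^sub>E H (\<lambda>_. UNIV). g (cnt H u) * Gf K P H u) \<le> Bnd g (card H)"
  using assms(1,3,4)
proof (induction H arbitrary: g P rule: finite_linorder_max_induct)
  case empty
  then show ?case by (simp add: Gf_def na_def Bnd_def phi_def)
next
  case (insert h A)
  let ?H = "insert h A"
  let ?n = "card A"
  define E where "E = (\<lambda>c. \<exists>k\<in>K. h \<le> k \<and> P k c (Suc (card A) - c))"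
  define P' where "P' = (\<lambda>k a b. k < h \<and> P k a b)"
  have hnA: "h \<notin> A" using insert by auto
  have h0: "0 < h" using insert by auto
  have A0: "\<forall>l\<in>A. 0 < l" using insert by auto
  have cH: "card ?H = Suc ?n" using hnA insert by simp
  have GS: "Gf K P ?H (u(h:=x)) =
     (if E (cnt ?H (u(h:=x))) then phi (Suc ?n) (cnt ?H (u(h:=x))) else Gf K P' A u)" for u x
    unfolding E_def P'_def by (rule Gf_step) (use insert h0 assms(2) in auto)
  define gT where "gT c = (if E (Suc c) then g (Suc c) * phi (Suc ?n) (Suc c) else 0)" for c
  define gF where "gF c = (if E c then g c * phi (Suc ?n) c else 0)" for c
  define g1 where "g1 c = (if E (Suc c) then 0 else g (Suc c))" for c
  define g0 where "g0 c = (if E c then 0 else g c)" for c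
  have "(\<Sum>u\<in>Pi\<^sub>E ?H (\<lambda>_. UNIV). g (cnt ?H u) * Gf K P ?H u)
      = (\<Sum>u\<in>Pi\<^sub>E A (\<lambda>_. UNIV). g (cnt ?H (u(h:=True))) * Gf K P ?H (u(h:=True))
            + g (cnt ?H (u(h:=False))) * Gf K P ?H (u(h:=False)))"
    by (rule sum_PiE_insert_bool[OF hnA insert(1)])
  also have "\<dots> = (\<Sum>u\<in>Pi\<^sub>E A (\<lambda>_. UNIV). (gT (cnt A u) + gF (cnt A u))
        + g1 (cnt A u) * Gf K P' A u + g0 (cnt A u) * Gf K P' A u)"
    by (intro sum.cong refl)
       (simp add: GS cnt_upd[OF hnA insert(1)] gT_def gF_def g1_def g0_def algebra_simps)
  also have "\<dots> = (\<Sum>u\<in>Pi\<^sub>E A (\<lambda>_. UNIV). (gT (cnt A u) + gF (cnt A u)))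
        + (\<Sum>u\<in>Pi\<^sub>E A (\<lambda>_. UNIV). g1 (cnt A u) * Gf K P' A u)
        + (\<Sum>u\<in>Pi\<^sub>E A (\<lambda>_. UNIV). g0 (cnt A u) * Gf K P' A u)"
    by (simp add: sum.distrib)
  also have "\<dots> \<le> (\<Sum>c\<le>?n. real (?n choose c) * (gT c + gF c)) + Bnd g1 ?n + Bnd g0 ?n"
  proof -
    have "(\<Sum>u\<in>Pi\<^sub>E A (\<lambda>_. UNIV). (gT (cnt A u) + gF (cnt A u))) = (\<Sum>c\<le>?n. real (?n choose c) * (gT c + gF c))"
      by (rule sum_cnt[OF insert(1)])
    moreover have "(\<Sum>u\<in>Pi\<^sub>E A (\<lambda>_. UNIV). g1 (cnt A u) * Gf K P' A u) \<le> Bnd g1 ?n"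
      by (rule insert.IH) (use A0 insert.prems in \<open>auto simp: g1_def\<close>)
    moreover have "(\<Sum>u\<in>Pi\<^sub>E A (\<lambda>_. UNIV). g0 (cnt A u) * Gf K P' A u) \<le> Bnd g0 ?n"
      by (rule insert.IH) (use A0 insert.prems in \<open>auto simp: g0_def\<close>)
    ultimately show ?thesis by linarith
  qed
  also have "\<dots> \<le> Bnd g (Suc ?n)"
    unfolding gT_def gF_def g1_def g0_def by (rule num_ineq) (use insert.prems in auto)
  finally show ?case unfolding cH .
qed

lemma binom_phi:
  assumes dn: "d < n"
  shows "real (n choose Suc d) * phi n (Suc d) = real (n choose d)"
proof -
  have i1: "real (n choose Suc d) * real (Suc d) = real (n choose d) * (real n - real d)"
    using binom_id[of n d] dn by (metis of_nat_diff less_imp_le of_nat_mult)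
  have pos: "real n - real d > 0" using dn by auto
  have "real (n choose Suc d) * phi n (Suc d) = (real (n choose Suc d) * real (Suc d)) / (real n - real d)"
    unfolding phi_def by simp
  also have "\<dots> = real (n choose d)" using i1 pos by simp
  finally show ?thesis .
qed

lemma bnd_final:
  fixes \<rho> :: real
  assumes "0 \<le> \<rho>" "\<rho> \<le> 1/2"
  shows "Bnd (\<lambda>c. \<rho> ^ c * (1 - \<rho>) ^ (n - c)) n \<le> 1"
proof -
  have "Bnd (\<lambda>c. \<rho> ^ c * (1 - \<rho>) ^ (n - c)) n
      \<le> (\<Sum>c\<le>n. (if c = 0 then 0 else real (n choose (c - 1)) * \<rho> ^ (c - 1) * (1 - \<rho>) ^ (n - (c - 1))))"
    unfolding Bnd_def
  proof (rule sum_mono)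
    fix c assume "c \<in> {..n}"
    then have c: "c \<le> n" by simp
    show "\<rho> ^ c * (1 - \<rho>) ^ (n - c) * (real (n choose c) * phi n c)
        \<le> (if c = 0 then 0 else real (n choose (c - 1)) * \<rho> ^ (c - 1) * (1 - \<rho>) ^ (n - (c - 1)))"
    proof (cases c)
      case 0
      then show ?thesis by (simp add: phi_def)
    next
      case (Suc d)
      with c have dn: "d < n" by simp
      have e: "n - d = Suc (n - Suc d)" using dn by simp
      have "\<rho> ^ c * (1 - \<rho>) ^ (n - c) = \<rho> ^ d * (1 - \<rho>) ^ (n - Suc d) * \<rho>"
        using Suc by simp
      also have "\<dots> \<le> \<rho> ^ d * (1 - \<rho>) ^ (n - Suc d) * (1 - \<rho>)"
        using assms by (intro mult_left_mono) auto
      also have "\<dots> = \<rho> ^ d * (1 - \<rho>) ^ (n - d)" unfolding e by simp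
      finally have le: "\<rho> ^ c * (1 - \<rho>) ^ (n - c) \<le> \<rho> ^ d * (1 - \<rho>) ^ (n - d)" .
      have "\<rho> ^ c * (1 - \<rho>) ^ (n - c) * (real (n choose c) * phi n c)
          = \<rho> ^ c * (1 - \<rho>) ^ (n - c) * real (n choose d)"
        using binom_phi[OF dn] Suc by simp
      also have "\<dots> \<le> \<rho> ^ d * (1 - \<rho>) ^ (n - d) * real (n choose d)"
        using le by (intro mult_right_mono) auto
      finally show ?thesis using Suc by (simp add: algebra_simps)
    qed
  qed
  also have "\<dots> \<le> (\<Sum>d\<le>n. real (n choose d) * \<rho> ^ d * (1 - \<rho>) ^ (n - d))"
  proof (cases n)
    case 0
    then show ?thesis by simp
  next
    case (Suc m)
    have "(\<Sum>c\<le>n. (if c = 0 then 0 else real (n choose (c - 1)) * \<rho> ^ (c - 1) * (1 - \<rho>) ^ (n - (c - 1))))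
        = (\<Sum>d\<le>m. real (n choose d) * \<rho> ^ d * (1 - \<rho>) ^ (n - d))"
      unfolding Suc by (subst sum.atMost_Suc_shift) simp
    also have "\<dots> \<le> (\<Sum>d\<le>n. real (n choose d) * \<rho> ^ d * (1 - \<rho>) ^ (n - d))"
      unfolding Suc using assms by (intro sum_mono2) auto
    finally show ?thesis .
  qed
  also have "\<dots> = (\<rho> + (1 - \<rho>)) ^ n"
    by (subst binomial_ring) (simp add: algebra_simps)
  finally show ?thesis by simp
qed

lemma weight_eq:
  fixes \<rho> :: real
  assumes "finite H"
  shows "(\<Prod>l\<in>H. if u l then \<rho> else 1 - \<rho>) = \<rho> ^ cnt H u * (1 - \<rho>) ^ (card H - cnt H u)"
proof -
  have s1: "H \<inter> {l. u l} = {l\<in>H. u l}" by auto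
  have s2: "H \<inter> - {l. u l} = H - {l\<in>H. u l}" by auto
  have "(\<Prod>l\<in>H. if u l then \<rho> else 1 - \<rho>) = (\<Prod>l\<in>H \<inter> {l. u l}. \<rho>) * (\<Prod>l\<in>H \<inter> - {l. u l}. 1 - \<rho>)"
    using assms by (rule prod.If_cases)
  also have "\<dots> = \<rho> ^ cnt H u * (1 - \<rho>) ^ (card H - cnt H u)"
    unfolding s1 s2 using assms by (simp add: cnt_def card_Diff_subset)
  finally show ?thesis .
qed

lemma weighted_Gf:
  fixes \<rho> :: real
  assumes "finite H" "finite K" "\<forall>l\<in>H. 0 < l" "0 \<le> \<rho>" "\<rho> \<le> 1/2"
  shows "(\<Sum>u\<in>Pi\<^sub>E H (\<lambda>_. UNIV). (\<Prod>l\<in>H. if u l then \<rho> else 1 - \<rho>) * Gf K P H u) \<le> 1"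
proof -
  have "(\<Sum>u\<in>Pi\<^sub>E H (\<lambda>_. UNIV). (\<Prod>l\<in>H. if u l then \<rho> else 1 - \<rho>) * Gf K P H u)
     = (\<Sum>u\<in>Pi\<^sub>E H (\<lambda>_. UNIV). (\<lambda>c. \<rho> ^ c * (1 - \<rho>) ^ (card H - c)) (cnt H u) * Gf K P H u)"
    by (intro sum.cong refl) (simp only: weight_eq[OF assms(1)])
  also have "\<dots> \<le> Bnd (\<lambda>c. \<rho> ^ c * (1 - \<rho>) ^ (card H - c)) (card H)"
    by (rule core) (use assms in auto)
  also have "\<dots> \<le> 1" by (rule bnd_final) (use assms in auto)
  finally show ?thesis .
qed

lemma ineq1:
  fixes a a' b b' :: nat and q :: real
  assumes "q > 0" "real (b + b') / real (max (a + a') 1) \<le> q"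
  shows "real a / (real (a + a') + 1 / q) \<le> q * (real a / (1 + real b))"
proof (cases "a = 0")
  case True
  then show ?thesis by simp
next
  case False
  then have m: "max (a + a') 1 = a + a'" by simp
  have pos: "real (a + a') > 0" using False by simp
  have "real b \<le> q * real (a + a')" using assms(2) pos unfolding m by (simp add: divide_le_eq)
  then have h: "1 + real b \<le> q * (real (a + a') + 1 / q)" using assms(1) by (simp add: algebra_simps)
  have "1 / q > 0" using assms(1) by simp
  then have X: "real (a + a') + 1 / q > 0" using pos by linarith
  have "real a * (1 + real b) \<le> real a * (q * (real (a + a') + 1 / q))"
    using h by (intro mult_left_mono) auto
  then show ?thesis using X assms(1) by (simp add: field_simps)
qed

lemma ineq2:
  fixes a a' b b' :: nat and q :: real
  assumes "q > 0" "(1 + real (b + b')) / real (max (a + a') 1) \<le> q"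
  shows "real a / real (max (a + a') 1) \<le> q * (real a / (1 + real b))"
proof (cases "a = 0")
  case True
  then show ?thesis by simp
next
  case False
  then have m: "max (a + a') 1 = a + a'" by simp
  have pos: "real (a + a') > 0" using False by simp
  have "1 + real (b + b') \<le> q * real (a + a')" using assms(2) pos unfolding m by (simp add: divide_le_eq)
  then have h: "1 + real b \<le> q * real (a + a')" by simp
  have "real a * (1 + real b) \<le> real a * (q * real (a + a'))"
    using h by (intro mult_left_mono) auto
  then show ?thesis using pos unfolding m by (simp add: field_simps)
qed

definition xof :: "nat set \<Rightarrow> (nat \<Rightarrow> bool) \<Rightarrow> (nat \<Rightarrow> bool) \<Rightarrow> nat \<Rightarrow> real" where
  "xof H0 u t = (\<lambda>l. if (if l \<in> H0 then u l else t l) then 0 else 1)"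

lemma xof_le: "(xof H0 u t l \<le> 1/2) = (if l \<in> H0 then u l else t l)"
  by (simp add: xof_def)

lemma counts_xof:
  assumes H0: "H0 \<subseteq> {1..N}" and k: "k \<le> N"
  defines "R \<equiv> {1..N} - H0"
  shows "n_le (xof H0 u t) k = na H0 u k + na R t k"
    "n_gt (xof H0 u t) k = nb H0 u k + nb R t k"
    "Vcnt H0 (xof H0 u t) k = na H0 u k"
proof -
  have fin: "finite H0" "finite R" using H0 finite_subset unfolding R_def by auto
  have "{l\<in>{1..k}. xof H0 u t l \<le> 1/2} = {l\<in>H0. l \<le> k \<and> u l} \<union> {l\<in>R. l \<le> k \<and> t l}"
    using H0 k unfolding R_def xof_le by auto
  moreover have "card ({l\<in>H0. l \<le> k \<and> u l} \<union> {l\<in>R. l \<le> k \<and> t l}) = na H0 u k + na R t k"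
    unfolding na_def using fin by (intro card_Un_disjoint) (auto simp: R_def)
  ultimately show "n_le (xof H0 u t) k = na H0 u k + na R t k" unfolding n_le_def by simp
  have "{l\<in>{1..k}. xof H0 u t l > 1/2} = {l\<in>H0. l \<le> k \<and> \<not> u l} \<union> {l\<in>R. l \<le> k \<and> \<not> t l}"
    using H0 k unfolding R_def by (auto simp: xof_def)
  moreover have "card ({l\<in>H0. l \<le> k \<and> \<not> u l} \<union> {l\<in>R. l \<le> k \<and> \<not> t l}) = nb H0 u k + nb R t k"
    unfolding nb_def using fin by (intro card_Un_disjoint) (auto simp: R_def)
  ultimately show "n_gt (xof H0 u t) k = nb H0 u k + nb R t k" unfolding n_gt_def by simp
  have "{l\<in>{1..k}. l \<in> H0 \<and> xof H0 u t l \<le> 1/2} = {l\<in>H0. l \<le> k \<and> u l}"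
    using H0 unfolding xof_le by auto
  then show "Vcnt H0 (xof H0 u t) k = na H0 u k" unfolding Vcnt_def na_def by simp
qed

definition Pt :: "real \<Rightarrow> real \<Rightarrow> nat set \<Rightarrow> (nat \<Rightarrow> bool) \<Rightarrow> nat \<Rightarrow> nat \<Rightarrow> nat \<Rightarrow> bool" where
  "Pt c q R t k a b = ((c + real (b + nb R t k)) / real (max (a + na R t k) 1) \<le> q)"

lemma khat_xof:
  assumes H0: "H0 \<subseteq> {1..N}" and K: "K \<subseteq> {1..N}"
  defines "R \<equiv> {1..N} - H0"
  shows "khat c K q (xof H0 u t) = Tst K (Pt c q R t) H0 u"
proof -
  have "{k \<in> K. (c + real (n_gt (xof H0 u t) k)) / real (max (n_le (xof H0 u t) k) 1) \<le> q}
      = {k\<in>K. Pt c q R t k (na H0 u k) (nb H0 u k)}"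
    using K counts_xof[OF H0, of _ u t] unfolding Pt_def R_def by (intro Collect_cong) (auto simp: add.commute)
  then show ?thesis unfolding khat_def Tst_def by simp
qed

lemma Gf_nonneg: "0 \<le> Gf K P H u"
  unfolding Gf_def by simp

lemma pointwise_bound:
  assumes H0: "H0 \<subseteq> {1..N}" and K: "K \<subseteq> {1..N}" and q: "q > 0"
  defines "R \<equiv> {1..N} - H0"
  shows "real (Vcnt H0 (xof H0 u t) (khat 0 K q (xof H0 u t)))
           / (real (n_le (xof H0 u t) (khat 0 K q (xof H0 u t))) + 1 / q)
         \<le> q * Gf K (Pt 0 q R t) H0 u"
    "real (Vcnt H0 (xof H0 u t) (khat 1 K q (xof H0 u t)))
           / real (max (n_le (xof H0 u t) (khat 1 K q (xof H0 u t))) 1)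
         \<le> q * Gf K (Pt 1 q R t) H0 u"
proof -
  have finK: "finite K" using K finite_subset by blast
  have z: "Vcnt H0 (xof H0 u t) 0 = 0"
    using counts_xof(3)[OF H0, of 0 u t] H0 unfolding na_def by fastforce
  have gen: "real (Vcnt H0 (xof H0 u t) (khat c K q (xof H0 u t))) / D (n_le (xof H0 u t) (khat c K q (xof H0 u t)))
         \<le> q * Gf K (Pt c q R t) H0 u"
    if D: "\<And>n. D n \<ge> 0"
      and I: "\<And>a a' b b'. (c + real (b + b')) / real (max (a + a') 1) \<le> q \<Longrightarrow>
                real a / D (a + a') \<le> q * (real a / (1 + real b))"
    for c :: real and D
  proof -
    let ?x = "xof H0 u t"
    have TT: "khat c K q ?x = Tst K (Pt c q R t) H0 u" unfolding R_def by (rule khat_xof[OF H0 K])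
    let ?T = "Tst K (Pt c q R t) H0 u"
    from Tst_in[OF finK, of "Pt c q R t" H0 u]
    show ?thesis
    proof
      assume "?T = 0"
      then show ?thesis unfolding TT using z q Gf_nonneg[of K "Pt c q R t" H0 u] by simp
    next
      assume a: "?T \<in> K \<and> Pt c q R t ?T (na H0 u ?T) (nb H0 u ?T)"
      then have TN: "?T \<le> N" using K by auto
      have "(c + real (nb H0 u ?T + nb R t ?T)) / real (max (na H0 u ?T + na R t ?T) 1) \<le> q"
        using a unfolding Pt_def by simp
      from I[OF this] show ?thesis unfolding TT using counts_xof[OF H0 TN] unfolding Gf_def R_def by simp
    qed
  qed
  show "real (Vcnt H0 (xof H0 u t) (khat 0 K q (xof H0 u t)))
           / (real (n_le (xof H0 u t) (khat 0 K q (xof H0 u t))) + 1 / q)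
         \<le> q * Gf K (Pt 0 q R t) H0 u"
    using gen[of "\<lambda>n. real n + 1/q" 0] q ineq1[OF q] by simp
  show "real (Vcnt H0 (xof H0 u t) (khat 1 K q (xof H0 u t)))
           / real (max (n_le (xof H0 u t) (khat 1 K q (xof H0 u t))) 1)
         \<le> q * Gf K (Pt 1 q R t) H0 u"
    using gen[of "\<lambda>n. real (max n 1)" 1] ineq2[OF q] by simp
qed

lemma inner_sums:
  fixes \<rho> :: real
  assumes H0: "H0 \<subseteq> {1..N}" and K: "K \<subseteq> {1..N}" and q: "q > 0" and r: "0 \<le> \<rho>" "\<rho> \<le> 1/2"
  shows "(\<Sum>u\<in>Pi\<^sub>E H0 (\<lambda>_. UNIV). (\<Prod>l\<in>H0. if u l then \<rho> else 1 - \<rho>) *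
          (real (Vcnt H0 (xof H0 u t) (khat 0 K q (xof H0 u t)))
           / (real (n_le (xof H0 u t) (khat 0 K q (xof H0 u t))) + 1 / q))) \<le> q"
    "(\<Sum>u\<in>Pi\<^sub>E H0 (\<lambda>_. UNIV). (\<Prod>l\<in>H0. if u l then \<rho> else 1 - \<rho>) *
          (real (Vcnt H0 (xof H0 u t) (khat 1 K q (xof H0 u t)))
           / real (max (n_le (xof H0 u t) (khat 1 K q (xof H0 u t))) 1))) \<le> q"
proof -
  have finH: "finite H0" and finK: "finite K" using H0 K finite_subset by auto
  have H0pos: "\<forall>l\<in>H0. 0 < l" using H0 by auto
  have w: "0 \<le> (\<Prod>l\<in>H0. if u l then \<rho> else 1 - \<rho>)" for u using r by (intro prod_nonneg) auto
  have gen: "(\<Sum>u\<in>Pi\<^sub>E H0 (\<lambda>_. UNIV). (\<Prod>l\<in>H0. if u l then \<rho> else 1 - \<rho>) * F u) \<le> q"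
    if F: "\<And>u. F u \<le> q * Gf K P H0 u" for F P
  proof -
    have "(\<Sum>u\<in>Pi\<^sub>E H0 (\<lambda>_. UNIV). (\<Prod>l\<in>H0. if u l then \<rho> else 1 - \<rho>) * F u)
        \<le> (\<Sum>u\<in>Pi\<^sub>E H0 (\<lambda>_. UNIV). (\<Prod>l\<in>H0. if u l then \<rho> else 1 - \<rho>) * (q * Gf K P H0 u))"
      using F w by (intro sum_mono mult_left_mono) auto
    also have "\<dots> = q * (\<Sum>u\<in>Pi\<^sub>E H0 (\<lambda>_. UNIV). (\<Prod>l\<in>H0. if u l then \<rho> else 1 - \<rho>) * Gf K P H0 u)"
      by (simp add: sum_distrib_left algebra_simps)
    also have "\<dots> \<le> q * 1"
      using weighted_Gf[OF finH finK H0pos r, of P] q by (intro mult_left_mono) auto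
    finally show ?thesis by simp
  qed
  show "(\<Sum>u\<in>Pi\<^sub>E H0 (\<lambda>_. UNIV). (\<Prod>l\<in>H0. if u l then \<rho> else 1 - \<rho>) *
          (real (Vcnt H0 (xof H0 u t) (khat 0 K q (xof H0 u t)))
           / (real (n_le (xof H0 u t) (khat 0 K q (xof H0 u t))) + 1 / q))) \<le> q"
    by (rule gen) (rule pointwise_bound(1)[OF H0 K q])
  show "(\<Sum>u\<in>Pi\<^sub>E H0 (\<lambda>_. UNIV). (\<Prod>l\<in>H0. if u l then \<rho> else 1 - \<rho>) *
          (real (Vcnt H0 (xof H0 u t) (khat 1 K q (xof H0 u t)))
           / real (max (n_le (xof H0 u t) (khat 1 K q (xof H0 u t))) 1))) \<le> q"
    by (rule gen) (rule pointwise_bound(2)[OF H0 K q])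
qed

lemma inv_counts:
  assumes "\<And>l. l \<in> {1..N} \<Longrightarrow> (x l \<le> 1/2) = (y l \<le> (1/2::real))" "k \<le> N"
  shows "n_le x k = n_le y k" "n_gt x k = n_gt y k" "Vcnt H0 x k = Vcnt H0 y k"
proof -
  have "{l\<in>{1..k}. x l \<le> 1/2} = {l\<in>{1..k}. y l \<le> 1/2}" using assms by auto
  then show "n_le x k = n_le y k" unfolding n_le_def by simp
  have "{l\<in>{1..k}. x l > 1/2} = {l\<in>{1..k}. y l > 1/2}" using assms by (auto simp: not_le[symmetric])
  then show "n_gt x k = n_gt y k" unfolding n_gt_def by simp
  have "{l\<in>{1..k}. l \<in> H0 \<and> x l \<le> 1/2} = {l\<in>{1..k}. l \<in> H0 \<and> y l \<le> 1/2}" using assms by auto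
  then show "Vcnt H0 x k = Vcnt H0 y k" unfolding Vcnt_def by simp
qed

lemma khat_le:
  assumes "K \<subseteq> {1..N}"
  shows "khat c K q x \<le> N"
proof -
  have "finite K" using assms finite_subset by blast
  then have "khat c K q x \<in> {0} \<union> {k \<in> K. (c + real (n_gt x k)) / real (max (n_le x k) 1) \<le> q}"
    unfolding khat_def by (intro Max_in) auto
  then show ?thesis using assms by auto
qed

lemma inv_khat:
  assumes "\<And>l. l \<in> {1..N} \<Longrightarrow> (x l \<le> 1/2) = (y l \<le> (1/2::real))" "K \<subseteq> {1..N}"
  shows "khat c K q x = khat c K q y"
proof -
  have "{k \<in> K. (c + real (n_gt x k)) / real (max (n_le x k) 1) \<le> q}
      = {k \<in> K. (c + real (n_gt y k)) / real (max (n_le y k) 1) \<le> q}"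
    using inv_counts[OF assms(1)] assms(2) by (intro Collect_cong) auto
  then show ?thesis unfolding khat_def by simp
qed

lemma inv_Phi:
  assumes "\<And>l. l \<in> {1..N} \<Longrightarrow> (x l \<le> 1/2) = (y l \<le> (1/2::real))" "K \<subseteq> {1..N}"
  shows "real (Vcnt H0 x (khat c K q x)) / (real (n_le x (khat c K q x)) + 1 / q)
       = real (Vcnt H0 y (khat c K q y)) / (real (n_le y (khat c K q y)) + 1 / q)"
    "real (Vcnt H0 x (khat c K q x)) / real (max (n_le x (khat c K q x)) 1)
       = real (Vcnt H0 y (khat c K q y)) / real (max (n_le y (khat c K q y)) 1)"
  using inv_khat[OF assms] inv_counts[OF assms(1) khat_le[OF assms(2)]] by simp_all



lemma PiE_restrict_iff:
  assumes "u \<in> Pi\<^sub>E H (\<lambda>_. UNIV)"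
  shows "(\<forall>l\<in>H. v l = u l) \<longleftrightarrow> u = restrict v H"
  using assms by (auto simp: PiE_iff extensional_def fun_eq_iff)

lemma (in prob_space) cell_bound:
  fixes p :: "nat \<Rightarrow> 'a \<Rightarrow> real" and \<Phi> :: "(nat \<Rightarrow> real) \<Rightarrow> real"
  assumes rv: "\<And>l. l \<in> {1..N} \<Longrightarrow> p l \<in> borel_measurable M"
    and H0: "H0 \<subseteq> {1..N}"
    and indep_null: "indep_vars (\<lambda>_. borel) p H0"
    and indep_nonnull: "indep_var (Pi\<^sub>M H0 (\<lambda>_. borel)) (\<lambda>\<omega>. restrict (\<lambda>l. p l \<omega>) H0)
          (Pi\<^sub>M ({1..N} - H0) (\<lambda>_. borel)) (\<lambda>\<omega>. restrict (\<lambda>l. p l \<omega>) ({1..N} - H0))"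
    and rho: "\<And>l. l \<in> H0 \<Longrightarrow> prob {\<omega>\<in>space M. p l \<omega> \<le> 1/2} = \<rho>"
    and inv: "\<And>x y. (\<And>l. l \<in> {1..N} \<Longrightarrow> (x l \<le> 1/2) = (y l \<le> (1/2::real))) \<Longrightarrow> \<Phi> x = \<Phi> y"
    and inner: "\<And>t. t \<in> Pi\<^sub>E ({1..N} - H0) (\<lambda>_. UNIV) \<Longrightarrow>
        (\<Sum>u\<in>Pi\<^sub>E H0 (\<lambda>_. UNIV). (\<Prod>l\<in>H0. if u l then \<rho> else 1 - \<rho>) * \<Phi> (xof H0 u t)) \<le> q"
    and q: "0 \<le> q"
  shows "integral\<^sup>L M (\<lambda>\<omega>. \<Phi> (\<lambda>l. p l \<omega>)) \<le> q"
proof -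
  define R where "R = {1..N} - H0"
  define U where "U = Pi\<^sub>E H0 (\<lambda>_. UNIV::bool set)"
  define T where "T = Pi\<^sub>E R (\<lambda>_. UNIV::bool set)"
  define YC where "YC u = {\<omega>\<in>space M. \<forall>l\<in>H0. (p l \<omega> \<le> 1/2) = u l}" for u
  define ZC where "ZC t = {\<omega>\<in>space M. \<forall>l\<in>R. (p l \<omega> \<le> 1/2) = t l}" for t
  have finH: "finite H0" and finR: "finite R" using H0 finite_subset unfolding R_def by auto
  have finU: "finite U" and finT: "finite T" unfolding U_def T_def using finH finR by (auto intro: finite_PiE)
  have mH[measurable]: "p l \<in> borel_measurable M" if "l \<in> H0" for l using rv H0 that by auto
  have mR[measurable]: "p l \<in> borel_measurable M" if "l \<in> R" for l using rv that unfolding R_def by auto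
  have YCs: "YC u \<in> events" for u unfolding YC_def using finH by measurable
  have ZCs: "ZC t \<in> events" for t unfolding ZC_def using finR by measurable
  have dec: "\<Phi> (\<lambda>l. p l \<omega>) = (\<Sum>u\<in>U. \<Sum>t\<in>T. \<Phi> (xof H0 u t) * indicator (YC u \<inter> ZC t) \<omega>)"
    if \<omega>: "\<omega> \<in> space M" for \<omega>
  proof -
    define u0 where "u0 = restrict (\<lambda>l. p l \<omega> \<le> 1/2) H0"
    define t0 where "t0 = restrict (\<lambda>l. p l \<omega> \<le> 1/2) R"
    have u0: "u0 \<in> U" and t0: "t0 \<in> T" unfolding u0_def t0_def U_def T_def by auto
    have ind: "indicator (YC u \<inter> ZC t) \<omega> = (if u = u0 \<and> t = t0 then 1 else (0::real))"
      if "u \<in> U" "t \<in> T" for u t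
    proof -
      have "\<omega> \<in> YC u \<longleftrightarrow> u = u0"
        using PiE_restrict_iff[of u H0 "\<lambda>l. p l \<omega> \<le> 1/2"] that \<omega> unfolding YC_def u0_def U_def by auto
      moreover have "\<omega> \<in> ZC t \<longleftrightarrow> t = t0"
        using PiE_restrict_iff[of t R "\<lambda>l. p l \<omega> \<le> 1/2"] that \<omega> unfolding ZC_def t0_def T_def by auto
      ultimately show ?thesis by (auto simp: indicator_def)
    qed
    have "(\<Sum>u\<in>U. \<Sum>t\<in>T. \<Phi> (xof H0 u t) * indicator (YC u \<inter> ZC t) \<omega>)
        = (\<Sum>u\<in>U. \<Sum>t\<in>T. if u = u0 \<and> t = t0 then \<Phi> (xof H0 u t) else 0)"
      by (intro sum.cong refl) (simp add: ind)
    also have "\<dots> = \<Phi> (xof H0 u0 t0)"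
    proof -
      have "(\<Sum>u\<in>U. \<Sum>t\<in>T. if u = u0 \<and> t = t0 then \<Phi> (xof H0 u t) else 0)
          = (\<Sum>u\<in>U. if u = u0 then \<Phi> (xof H0 u t0) else 0)"
        by (intro sum.cong refl) (cases "u = u0", simp_all add: sum.delta t0 finT)
      also have "\<dots> = \<Phi> (xof H0 u0 t0)" by (simp add: sum.delta u0 finU)
      finally show ?thesis .
    qed
    also have "\<dots> = \<Phi> (\<lambda>l. p l \<omega>)"
    proof (rule inv)
      fix l assume "l \<in> {1..N}"
      then show "(xof H0 u0 t0 l \<le> 1/2) = (p l \<omega> \<le> 1/2)"
        unfolding xof_le u0_def t0_def R_def by auto
    qed
    finally show ?thesis by simp
  qed
  then have "integral\<^sup>L M (\<lambda>\<omega>. \<Phi> (\<lambda>l. p l \<omega>))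
      = integral\<^sup>L M (\<lambda>\<omega>. \<Sum>u\<in>U. \<Sum>t\<in>T. \<Phi> (xof H0 u t) * indicator (YC u \<inter> ZC t) \<omega>)"
    by (intro Bochner_Integration.integral_cong) auto
  also have "\<dots> = (\<Sum>u\<in>U. \<Sum>t\<in>T. \<Phi> (xof H0 u t) * prob (YC u \<inter> ZC t))"
  proof -
    have int: "integrable M (\<lambda>\<omega>. \<Phi> (xof H0 u t) * indicator (YC u \<inter> ZC t) \<omega>)" for u t
      using YCs[of u] ZCs[of t] by (intro integrable_mult_right integrable_real_indicator) (auto simp: less_top[symmetric])
    have "integral\<^sup>L M (\<lambda>\<omega>. \<Sum>u\<in>U. \<Sum>t\<in>T. \<Phi> (xof H0 u t) * indicator (YC u \<inter> ZC t) \<omega>)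
        = (\<Sum>u\<in>U. integral\<^sup>L M (\<lambda>\<omega>. \<Sum>t\<in>T. \<Phi> (xof H0 u t) * indicator (YC u \<inter> ZC t) \<omega>))"
      by (rule Bochner_Integration.integral_sum) (use int in auto)
    also have "\<dots> = (\<Sum>u\<in>U. \<Sum>t\<in>T. integral\<^sup>L M (\<lambda>\<omega>. \<Phi> (xof H0 u t) * indicator (YC u \<inter> ZC t) \<omega>))"
      by (intro sum.cong refl Bochner_Integration.integral_sum int)
    also have "\<dots> = (\<Sum>u\<in>U. \<Sum>t\<in>T. \<Phi> (xof H0 u t) * prob (YC u \<inter> ZC t))"
      using YCs ZCs by (intro sum.cong refl) (simp add: Int_absorb2 sets.sets_into_space)
    finally show ?thesis .
  qed
  also have "\<dots> = (\<Sum>u\<in>U. \<Sum>t\<in>T. \<Phi> (xof H0 u t) * ((\<Prod>l\<in>H0. if u l then \<rho> else 1 - \<rho>) * prob (ZC t)))"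
  proof (intro sum.cong refl arg_cong2[where f="(*)"])
    fix u t
    define Xa where "Xa = {y\<in>space (Pi\<^sub>M H0 (\<lambda>_. borel)). \<forall>l\<in>H0. (y l \<le> (1/2::real)) = u l}"
    define Xb where "Xb = {y\<in>space (Pi\<^sub>M R (\<lambda>_. borel)). \<forall>l\<in>R. (y l \<le> (1/2::real)) = t l}"
    have Xa: "Xa \<in> sets (Pi\<^sub>M H0 (\<lambda>_. borel))" unfolding Xa_def using finH by measurable
    have Xb: "Xb \<in> sets (Pi\<^sub>M R (\<lambda>_. borel))" unfolding Xb_def using finR by measurable
    have "prob ((\<lambda>x. (restrict (\<lambda>l. p l x) H0, restrict (\<lambda>l. p l x) R)) -` (Xa \<times> Xb) \<inter> space M) =
      prob ((\<lambda>x. restrict (\<lambda>l. p l x) H0) -` Xa \<inter> space M) * prob ((\<lambda>x. restrict (\<lambda>l. p l x) R) -` Xb \<inter> space M)"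
      by (rule indep_varD[OF indep_nonnull[folded R_def] Xa Xb])
    moreover have "(\<lambda>x. (restrict (\<lambda>l. p l x) H0, restrict (\<lambda>l. p l x) R)) -` (Xa \<times> Xb) \<inter> space M = YC u \<inter> ZC t"
      unfolding Xa_def Xb_def YC_def ZC_def by (auto simp: space_PiM)
    moreover have "(\<lambda>x. restrict (\<lambda>l. p l x) H0) -` Xa \<inter> space M = YC u"
      unfolding Xa_def YC_def by (auto simp: space_PiM)
    moreover have "(\<lambda>x. restrict (\<lambda>l. p l x) R) -` Xb \<inter> space M = ZC t"
      unfolding Xb_def ZC_def by (auto simp: space_PiM)
    moreover have "prob (YC u) = (\<Prod>l\<in>H0. if u l then \<rho> else 1 - \<rho>)"
    proof (cases "H0 = {}")
      case True
      then show ?thesis unfolding YC_def by (simp add: prob_space)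
    next
      case False
      define A where "A l = {x::real. (x \<le> 1/2) = u l}" for l
      have "YC u = (\<Inter>l\<in>H0. p l -` A l \<inter> space M)"
        using False unfolding YC_def A_def by auto
      also have "prob \<dots> = (\<Prod>l\<in>H0. prob (p l -` A l \<inter> space M))"
      proof (rule indep_varsD[OF indep_null False finH])
        fix l assume "l \<in> H0"
        show "A l \<in> sets borel"
        proof (cases "u l")
          case True
          then have "A l = {..1/2}" unfolding A_def by auto
          then show ?thesis by simp
        next
          case False
          then have "A l = {1/2<..}" unfolding A_def by auto
          then show ?thesis by simp
        qed
      qed simp
      also have "\<dots> = (\<Prod>l\<in>H0. if u l then \<rho> else 1 - \<rho>)"
      proof (intro prod.cong refl)
        fix l assume l: "l \<in> H0"
        have ev: "{\<omega>\<in>space M. p l \<omega> \<le> 1/2} \<in> events" using l by measurable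
        have e1: "p l -` {x. x \<le> 1/2} \<inter> space M = {\<omega>\<in>space M. p l \<omega> \<le> 1/2}" by auto
        have e2: "p l -` {x. \<not> x \<le> 1/2} \<inter> space M = space M - {\<omega>\<in>space M. p l \<omega> \<le> 1/2}" by auto
        show "prob (p l -` A l \<inter> space M) = (if u l then \<rho> else 1 - \<rho>)"
          unfolding A_def using rho[OF l] prob_compl[OF ev] e1 e2 by auto
      qed
      finally show ?thesis .
    qed
    ultimately show "prob (YC u \<inter> ZC t) = (\<Prod>l\<in>H0. if u l then \<rho> else 1 - \<rho>) * prob (ZC t)"
      by simp
  qed
  also have "\<dots> = (\<Sum>t\<in>T. prob (ZC t) * (\<Sum>u\<in>U. (\<Prod>l\<in>H0. if u l then \<rho> else 1 - \<rho>) * \<Phi> (xof H0 u t)))"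
    by (subst sum.swap) (simp add: sum_distrib_left algebra_simps)
  also have "\<dots> \<le> (\<Sum>t\<in>T. prob (ZC t) * q)"
    using inner unfolding U_def T_def R_def by (intro sum_mono mult_left_mono) auto
  also have "\<dots> = prob (\<Union>t\<in>T. ZC t) * q"
  proof -
    have "disjoint_family_on ZC T"
    unfolding disjoint_family_on_def
    proof (intro ballI impI)
      fix t t' assume tt: "t \<in> T" "t' \<in> T" "t \<noteq> t'"
      show "ZC t \<inter> ZC t' = {}"
      proof (rule ccontr)
        assume "ZC t \<inter> ZC t' \<noteq> {}"
        then obtain \<omega> where w: "\<omega> \<in> ZC t" "\<omega> \<in> ZC t'" by blast
        have a1: "\<forall>l\<in>R. (p l \<omega> \<le> 1/2) = t l" using w(1) unfolding ZC_def by blast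
        have a2: "\<forall>l\<in>R. (p l \<omega> \<le> 1/2) = t' l" using w(2) unfolding ZC_def by blast
        have tT: "t \<in> Pi\<^sub>E R (\<lambda>_. UNIV)" "t' \<in> Pi\<^sub>E R (\<lambda>_. UNIV)" using tt unfolding T_def by auto
        have "t = restrict (\<lambda>l. p l \<omega> \<le> 1/2) R"
          using PiE_restrict_iff[OF tT(1), of "\<lambda>l. p l \<omega> \<le> 1/2"] a1 by blast
        moreover have "t' = restrict (\<lambda>l. p l \<omega> \<le> 1/2) R"
          using PiE_restrict_iff[OF tT(2), of "\<lambda>l. p l \<omega> \<le> 1/2"] a2 by blast
        ultimately show False using tt by simp
      qed
    qed
    then have "prob (\<Union>t\<in>T. ZC t) = (\<Sum>t\<in>T. prob (ZC t))"
      using finT ZCs by (intro finite_measure_finite_Union) auto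
    then show ?thesis by (simp add: sum_distrib_right)
  qed
  also have "\<dots> \<le> 1 * q" using q by (intro mult_right_mono) auto
  finally show ?thesis by simp
qed

theorem lemma4:
  fixes M :: "'a measure" and N :: nat and p :: "nat \<Rightarrow> 'a \<Rightarrow> real"
    and H0 :: "nat set" and K :: "nat set" and q :: real
  assumes "prob_space M"
    and rv: "\<And>l. l \<in> {1..N} \<Longrightarrow> p l \<in> borel_measurable M"
    and H0: "H0 \<subseteq> {1..N}"
    and ident: "\<And>l l'. l \<in> H0 \<Longrightarrow> l' \<in> H0 \<Longrightarrow> distr M borel (p l) = distr M borel (p l')"
    and indep_null: "prob_space.indep_vars M (\<lambda>_. borel) p H0"
    and indep_nonnull: "prob_space.indep_var M
          (Pi\<^sub>M H0 (\<lambda>_. borel)) (\<lambda>\<omega>. restrict (\<lambda>l. p l \<omega>) H0)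
          (Pi\<^sub>M ({1..N} - H0) (\<lambda>_. borel)) (\<lambda>\<omega>. restrict (\<lambda>l. p l \<omega>) ({1..N} - H0))"
    and superunif: "\<And>l u. l \<in> H0 \<Longrightarrow> 0 \<le> u \<Longrightarrow> u \<le> 1 \<Longrightarrow>
          measure M {\<omega> \<in> space M. p l \<omega> \<le> u} \<le> u"
    and q: "0 < q" "q \<le> 1"
    and K: "K \<subseteq> {1..N}"
  shows "integral\<^sup>L M (\<lambda>\<omega>. real (Vcnt H0 (\<lambda>l. p l \<omega>) (khat 0 K q (\<lambda>l. p l \<omega>)))
             / (real (n_le (\<lambda>l. p l \<omega>) (khat 0 K q (\<lambda>l. p l \<omega>))) + 1 / q)) \<le> q
       \<and> integral\<^sup>L M (\<lambda>\<omega>. real (Vcnt H0 (\<lambda>l. p l \<omega>) (khat 1 K q (\<lambda>l. p l \<omega>)))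
             / real (max (n_le (\<lambda>l. p l \<omega>) (khat 1 K q (\<lambda>l. p l \<omega>))) 1)) \<le> q"
proof -
  interpret prob_space M by fact
  define l0 where "l0 = (SOME l. l \<in> H0)"
  define \<rho> where "\<rho> = (if H0 = {} then 0 else prob {\<omega>\<in>space M. p l0 \<omega> \<le> 1/2})"
  have pr: "prob {\<omega>\<in>space M. p l \<omega> \<le> 1/2} = measure (distr M borel (p l)) {..1/2}" if "l \<in> H0" for l
  proof -
    have m: "p l \<in> borel_measurable M" using rv H0 that by auto
    have "p l -` {..1/2} \<inter> space M = {\<omega>\<in>space M. p l \<omega> \<le> 1/2}" by auto
    then show ?thesis using measure_distr[OF m, of "{..1/2}"] by simp
  qed
  have rho: "prob {\<omega>\<in>space M. p l \<omega> \<le> 1/2} = \<rho>" if l: "l \<in> H0" for l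
  proof -
    have l0: "l0 \<in> H0" unfolding l0_def using l by (rule someI)
    show ?thesis unfolding \<rho>_def using l l0 pr[OF l] pr[OF l0] ident[OF l l0] by auto
  qed
  have r0: "0 \<le> \<rho>" unfolding \<rho>_def by simp
  have r1: "\<rho> \<le> 1/2"
  proof (cases "H0 = {}")
    case False
    then have l0: "l0 \<in> H0" unfolding l0_def by (simp add: some_in_eq)
    show ?thesis unfolding \<rho>_def using False superunif[OF l0, of "1/2"] by simp
  qed (simp add: \<rho>_def)
  have q0: "0 \<le> q" using q by simp
  show ?thesis
  proof
    show "integral\<^sup>L M (\<lambda>\<omega>. real (Vcnt H0 (\<lambda>l. p l \<omega>) (khat 0 K q (\<lambda>l. p l \<omega>)))
             / (real (n_le (\<lambda>l. p l \<omega>) (khat 0 K q (\<lambda>l. p l \<omega>))) + 1 / q)) \<le> q"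
      by (rule cell_bound[where \<Phi>="\<lambda>x. real (Vcnt H0 x (khat 0 K q x)) / (real (n_le x (khat 0 K q x)) + 1 / q)",
            OF rv H0 indep_null indep_nonnull rho _ _ q0])
        (assumption | rule inv_Phi(1)[OF _ K] inner_sums(1)[OF H0 K q(1) r0 r1])+
    show "integral\<^sup>L M (\<lambda>\<omega>. real (Vcnt H0 (\<lambda>l. p l \<omega>) (khat 1 K q (\<lambda>l. p l \<omega>)))
             / real (max (n_le (\<lambda>l. p l \<omega>) (khat 1 K q (\<lambda>l. p l \<omega>))) 1)) \<le> q"
      by (rule cell_bound[where \<Phi>="\<lambda>x. real (Vcnt H0 x (khat 1 K q x)) / real (max (n_le x (khat 1 K q x)) 1)",
            OF rv H0 indep_null indep_nonnull rho _ _ q0])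
        (assumption | rule inv_Phi(2)[OF _ K] inner_sums(2)[OF H0 K q(1) r0 r1])+
  qed
qed

end
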